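(* Let $N=2^L$ ($L\ge1$), channel numbers $r_0,\dots,r_{L-1}\ge1$, an output index $y$, and linearly independent representation functions $f_{\theta_1},\dots,f_{\theta_M}\in\mathcal F$ be given for the deep ConvNet with linear activation and product pooling. Suppose its linear weights $\{\mathbf a^{l,j,\gamma}\}$ are drawn from a distribution that is absolutely continuous with respect to Lebesgue measure. Then with probability $1$ the score function $h^D_y$ differs from the score function $h^S_y$ of every shallow ConvNet with ReLU activation and max pooling whose number of hidden channels satisfies $Z<\min\{r_0,M\}^{N/2}\cdot\frac{2}{M\cdot N}$ (for any choice of its representation functions in $\mathcal F$ and weights).
   Context: Inputs are $X=(\mathbf x_1,\dots,\mathbf x_N)\in(\mathbb R^s)^N$. Representation functions come from a family $\mathcal F=\{f_\theta:\mathbb R^s\to\mathbb R:\theta\in\Theta\}$ assumed throughout to satisfy: (continuity) $f_\theta(\mathbf x)$ continuous in $\theta$ and $\mathbf x$; (non-degeneracy) for any pairwise distinct $\mathbf x^{(1)},\dots,\mathbf x^{(M)}$ there exist $f_{\theta_1},\dots,f_{\theta_M}\in\mathcal F$ with $(f_{\theta_d}(\mathbf x^{(i)}))_{i,d}$ non-singular. Linear activation with product pooling: $\sigma(z)=z$, $P=$ product. ReLU activation with max pooling: $\sigma(z)=\max\{0,z\}$, $P=\max$. Shallow ConvNet (activation $\sigma$, pooling $P$, $Z$ hidden channels): $h^S_y(X)=\sum_{z=1}^Z a^y_z\,P_{i\in[N]}\big(\sigma(\sum_{d=1}^M a^{z,i}_d f_{\theta_d}(\mathbf x_i))\big)$,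 $f_{\theta_d}\in\mathcal F$, $\mathbf a^{z,i}\in\mathbb R^M$, $\mathbf a^y\in\mathbb R^Z$. Deep ConvNet (activation $\sigma$, pooling $P$): with $f_{\theta_d}$, weights $\mathbf a^{0,j,\gamma}\in\mathbb R^M$ ($j\in[N],\gamma\in[r_0]$), $\mathbf a^{l,j,\gamma}\in\mathbb R^{r_{l-1}}$ ($l\in[L-1]$, $j\in[N/2^l]$, $\gamma\in[r_l]$), $\mathbf a^{L,1,y}\in\mathbb R^{r_{L-1}}$: $u^0_{j,\gamma}=\sigma(\sum_d a^{0,j,\gamma}_d f_{\theta_d}(\mathbf x_j))$; for $l=0,\dots,L-1$, $v^l_{j,\gamma}=P(u^l_{2j-1,\gamma},u^l_{2j,\gamma})$ ($j\in[N/2^{l+1}]$), and for $l\ge1$, $u^l_{j,\gamma}=\sigma(\sum_\alpha a^{l,j,\gamma}_\alpha v^{l-1}_{j,\alpha})$ ($j\in[N/2^l]$); $h^D_y(X)=\sum_\alpha a^{L,1,y}_\alpha v^{L-1}_{1,\alpha}$. *)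

theory Defs
  imports "HOL-Probability.Probability"
begin

definition det_sq :: "nat \<Rightarrow> (nat \<Rightarrow> nat \<Rightarrow> real) \<Rightarrow> real" where
  "det_sq M A = (\<Sum>p | p permutes {0..<M}. of_int (sign p) * (\<Prod>i<M. A i (p i)))"

definition rep_family :: "'p::topological_space set \<Rightarrow> ('p \<Rightarrow> real^'s \<Rightarrow> real) \<Rightarrow> bool" where
  "rep_family \<Theta> f \<longleftrightarrow>
     continuous_on (\<Theta> \<times> UNIV) (\<lambda>(\<theta>, x). f \<theta> x) \<and>
     (\<forall>M (xs :: nat \<Rightarrow> real^'s). inj_on xs {0..<M} \<longrightarrow>
        (\<exists>\<theta>s. (\<forall>d<M. \<theta>s d \<in> \<Theta>) \<and> det_sq M (\<lambda>i d. f (\<theta>s d) (xs i)) \<noteq> 0))"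

definition lin_indep_funs :: "nat \<Rightarrow> (nat \<Rightarrow> 'x \<Rightarrow> real) \<Rightarrow> bool" where
  "lin_indep_funs M g \<longleftrightarrow>
     (\<forall>c. (\<forall>x. (\<Sum>d=1..M. c d * g d x) = 0) \<longrightarrow> (\<forall>d\<in>{1..M}. c d = 0))"

(* Weights w (l, j, \<gamma>, \<alpha>) = a^{l,j,\<gamma>}_\<alpha>; input X i = x_i (i = 1..N);
   representation functions f (\<theta> d), d = 1..M; channel numbers r l.
   deep_u ... l j \<gamma> = u^l_{j,\<gamma>}. *)
primrec deep_u :: "(real \<Rightarrow> real) \<Rightarrow> (real \<Rightarrow> real \<Rightarrow> real) \<Rightarrow> ('p \<Rightarrow> 'x \<Rightarrow> real) \<Rightarrow> (nat \<Rightarrow> 'p)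
    \<Rightarrow> nat \<Rightarrow> (nat \<Rightarrow> nat) \<Rightarrow> (nat \<times> nat \<times> nat \<times> nat \<Rightarrow> real) \<Rightarrow> (nat \<Rightarrow> 'x)
    \<Rightarrow> nat \<Rightarrow> nat \<Rightarrow> nat \<Rightarrow> real" where
  "deep_u \<sigma> P f \<theta> M r w X 0 j \<gamma> = \<sigma> (\<Sum>d=1..M. w (0, j, \<gamma>, d) * f (\<theta> d) (X j))"
| "deep_u \<sigma> P f \<theta> M r w X (Suc l) j \<gamma> =
     \<sigma> (\<Sum>\<alpha>=1..r l. w (Suc l, j, \<gamma>, \<alpha>) *
          P (deep_u \<sigma> P f \<theta> M r w X l (2*j - 1) \<alpha>) (deep_u \<sigma> P f \<theta> M r w X l (2*j) \<alpha>))"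

definition deep_v :: "(real \<Rightarrow> real) \<Rightarrow> (real \<Rightarrow> real \<Rightarrow> real) \<Rightarrow> ('p \<Rightarrow> 'x \<Rightarrow> real) \<Rightarrow> (nat \<Rightarrow> 'p)
    \<Rightarrow> nat \<Rightarrow> (nat \<Rightarrow> nat) \<Rightarrow> (nat \<times> nat \<times> nat \<times> nat \<Rightarrow> real) \<Rightarrow> (nat \<Rightarrow> 'x)
    \<Rightarrow> nat \<Rightarrow> nat \<Rightarrow> nat \<Rightarrow> real" where
  "deep_v \<sigma> P f \<theta> M r w X l j \<gamma> =
     P (deep_u \<sigma> P f \<theta> M r w X l (2*j - 1) \<gamma>) (deep_u \<sigma> P f \<theta> M r w X l (2*j) \<gamma>)"

definition deep_score :: "(real \<Rightarrow> real) \<Rightarrow> (real \<Rightarrow> real \<Rightarrow> real) \<Rightarrow> ('p \<Rightarrow> 'x \<Rightarrow> real) \<Rightarrow> (nat \<Rightarrow> 'p)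
    \<Rightarrow> nat \<Rightarrow> (nat \<Rightarrow> nat) \<Rightarrow> nat \<Rightarrow> (nat \<times> nat \<times> nat \<times> nat \<Rightarrow> real) \<Rightarrow> nat \<Rightarrow> (nat \<Rightarrow> 'x) \<Rightarrow> real" where
  "deep_score \<sigma> P f \<theta> M r L w y X =
     (\<Sum>\<alpha>=1..r (L - 1). w (L, 1, y, \<alpha>) * deep_v \<sigma> P f \<theta> M r w X (L - 1) 1 \<alpha>)"

definition deep_weight_idx :: "nat \<Rightarrow> (nat \<Rightarrow> nat) \<Rightarrow> nat \<Rightarrow> nat \<Rightarrow> (nat \<times> nat \<times> nat \<times> nat) set" where
  "deep_weight_idx M r L Y =
     {(l, j, \<gamma>, d). l = 0 \<and> j \<in> {1..2^L} \<and> \<gamma> \<in> {1..r 0} \<and> d \<in> {1..M}}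
   \<union> {(l, j, \<gamma>, \<alpha>). l \<in> {1..L - 1} \<and> j \<in> {1..2^L div 2^l} \<and> \<gamma> \<in> {1..r l} \<and> \<alpha> \<in> {1..r (l - 1)}}
   \<union> {(l, j, \<gamma>, \<alpha>). l = L \<and> j = 1 \<and> \<gamma> \<in> {1..Y} \<and> \<alpha> \<in> {1..r (L - 1)}}"

definition shallow_relu_max :: "('p \<Rightarrow> 'x \<Rightarrow> real) \<Rightarrow> (nat \<Rightarrow> 'p) \<Rightarrow> nat \<Rightarrow> nat \<Rightarrow> nat
    \<Rightarrow> (nat \<Rightarrow> nat \<Rightarrow> nat \<Rightarrow> real) \<Rightarrow> (nat \<Rightarrow> real) \<Rightarrow> (nat \<Rightarrow> 'x) \<Rightarrow> real" where
  "shallow_relu_max f \<phi> M N Z a b X =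
     (\<Sum>z=1..Z. b z * Max ((\<lambda>i. max 0 (\<Sum>d=1..M. a z i d * f (\<phi> d) (X i))) ` {1..N}))"

end

theory Submission
  imports Defs "Jordan_Normal_Form.Determinant"
begin

inductive_set poly_fun :: "'i set \<Rightarrow> (('i \<Rightarrow> real) \<Rightarrow> real) set" for I where
  pf_const: "(\<lambda>w. c) \<in> poly_fun I"
| pf_proj: "i \<in> I \<Longrightarrow> (\<lambda>w. w i) \<in> poly_fun I"
| pf_add: "p \<in> poly_fun I \<Longrightarrow> q \<in> poly_fun I \<Longrightarrow> (\<lambda>w. p w + q w) \<in> poly_fun I"
| pf_mult: "p \<in> poly_fun I \<Longrightarrow> q \<in> poly_fun I \<Longrightarrow> (\<lambda>w. p w * q w) \<in> poly_fun I"

lemma pf_indep: "p \<in> poly_fun I \<Longrightarrow> i \<notin> I \<Longrightarrow> p (w(i:=t)) = p w"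
  by (induction rule: poly_fun.induct) auto

lemma pf_meas: "p \<in> poly_fun I \<Longrightarrow> p \<in> borel_measurable (PiM I (\<lambda>_. lborel))"
proof (induction rule: poly_fun.induct)
  case (pf_proj i)
  then have "(\<lambda>w. w i) \<in> PiM I (\<lambda>_. lborel) \<rightarrow>\<^sub>M lborel"
    by (rule measurable_component_singleton)
  then show ?case by simp
qed auto

lemma pf_sum: "(\<And>x. x \<in> S \<Longrightarrow> F x \<in> poly_fun I) \<Longrightarrow> (\<lambda>w. \<Sum>x\<in>S. F x w) \<in> poly_fun I"
proof (cases "finite S")
  case True
  assume "\<And>x. x \<in> S \<Longrightarrow> F x \<in> poly_fun I"
  with True show ?thesis
    by (induction S rule: finite_induct) (auto intro: poly_fun.intros)
qed (auto intro: poly_fun.intros)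

lemma pf_prod: "(\<And>x. x \<in> S \<Longrightarrow> F x \<in> poly_fun I) \<Longrightarrow> (\<lambda>w. \<Prod>x\<in>S. F x w) \<in> poly_fun I"
proof (cases "finite S")
  case True
  assume "\<And>x. x \<in> S \<Longrightarrow> F x \<in> poly_fun I"
  with True show ?thesis
    by (induction S rule: finite_induct) (auto intro: poly_fun.intros)
qed (auto intro: poly_fun.intros)

definition lpoly :: "((('i \<Rightarrow> real) \<Rightarrow> real) \<times> nat) list \<Rightarrow> ('i \<Rightarrow> real) \<Rightarrow> real poly" where
  "lpoly cs w = sum_list (map (\<lambda>(c,e). monom (c w) e) cs)"

lemma lpoly_append[simp]: "lpoly (xs @ ys) w = lpoly xs w + lpoly ys w"
  by (simp add: lpoly_def)

lemma lpoly_Cons[simp]: "lpoly ((c,e) # ys) w = monom (c w) e + lpoly ys w"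
  by (simp add: lpoly_def)

lemma lpoly_Nil[simp]: "lpoly [] w = 0"
  by (simp add: lpoly_def)

lemma lpoly_mult: "lpoly [(\<lambda>w. c1 w * c2 w, e1 + e2). (c1, e1) \<leftarrow> xs, (c2, e2) \<leftarrow> ys] w
   = lpoly xs w * lpoly ys w"
proof (induction xs)
  case Nil then show ?case by simp
next
  case (Cons x xs)
  obtain c1 e1 where x: "x = (c1, e1)" by force
  have "lpoly (map (\<lambda>(c2,e2). (\<lambda>w. c1 w * c2 w, e1 + e2)) ys) w = monom (c1 w) e1 * lpoly ys w"
    by (induction ys) (auto simp: algebra_simps mult_monom)
  then show ?case using Cons x
    by (simp add: algebra_simps split_def)
qed

definition lcoef :: "((('i \<Rightarrow> real) \<Rightarrow> real) \<times> nat) list \<Rightarrow> nat \<Rightarrow> ('i \<Rightarrow> real) \<Rightarrow> real" where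
  "lcoef cs k w = sum_list (map (\<lambda>(c,e). if e = k then c w else 0) cs)"

lemma coeff_lpoly: "coeff (lpoly cs w) k = lcoef cs k w"
  by (induction cs) (auto simp: lcoef_def lpoly_def coeff_monom)

lemma lcoef_pf: "\<forall>(c,e)\<in>set cs. c \<in> poly_fun J \<Longrightarrow> lcoef cs k \<in> poly_fun J"
proof (induction cs)
  case Nil then show ?case by (simp add: lcoef_def pf_const)
next
  case (Cons x cs)
  obtain c e where x: "x = (c, e)" by force
  have eq: "lcoef (x # cs) k = (\<lambda>w. (if e = k then c w else 0) + lcoef cs k w)"
    by (auto simp: lcoef_def x)
  show ?case unfolding eq
    apply (rule pf_add)
    subgoal using Cons x by (cases "e = k") (auto intro: poly_fun.intros)
    subgoal using Cons.IH Cons.prems x by auto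
    done
qed

lemma pf_decomp:
  assumes "p \<in> poly_fun (insert i J)"
  shows "\<exists>cs. (\<forall>(c,e)\<in>set cs. c \<in> poly_fun J) \<and> (\<forall>w t. p (w(i:=t)) = poly (lpoly cs w) t)"
  using assms
proof (induction rule: poly_fun.induct)
  case (pf_const c)
  show ?case by (rule exI[of _ "[(\<lambda>w. c, 0)]"]) (auto intro: poly_fun.intros simp: poly_monom)
next
  case (pf_proj j)
  show ?case
  proof (cases "j = i")
    case True
    then show ?thesis by (intro exI[of _ "[(\<lambda>w. 1, 1)]"]) (auto intro: poly_fun.intros simp: poly_monom)
  next
    case False
    then have "j \<in> J" using pf_proj by auto
    with False show ?thesis by (intro exI[of _ "[(\<lambda>w. w j, 0)]"]) (auto intro: poly_fun.intros simp: poly_monom)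
  qed
next
  case (pf_add p q)
  then obtain cs ds where cs: "\<forall>(c,e)\<in>set cs. c \<in> poly_fun J" "\<forall>w t. p (w(i:=t)) = poly (lpoly cs w) t"
    and ds: "\<forall>(c,e)\<in>set ds. c \<in> poly_fun J" "\<forall>w t. q (w(i:=t)) = poly (lpoly ds w) t" by blast
  show ?case
    apply (rule exI[of _ "cs @ ds"])
    using cs ds by (metis (no_types, lifting) Un_iff lpoly_append poly_add set_append)
next
  case (pf_mult p q)
  then obtain cs ds where cs: "\<forall>(c,e)\<in>set cs. c \<in> poly_fun J" "\<forall>w t. p (w(i:=t)) = poly (lpoly cs w) t"
    and ds: "\<forall>(c,e)\<in>set ds. c \<in> poly_fun J" "\<forall>w t. q (w(i:=t)) = poly (lpoly ds w) t" by blast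
  show ?case
    apply (rule exI[of _ "[(\<lambda>w. c1 w * c2 w, e1 + e2). (c1, e1) \<leftarrow> cs, (c2, e2) \<leftarrow> ds]"])
    apply (intro conjI)
    subgoal using cs(1) ds(1) by (auto intro!: poly_fun.intros)
    subgoal using cs(2) ds(2) by (simp only: lpoly_mult poly_mult) simp
    done
qed

interpretation lb: product_sigma_finite "\<lambda>_::'i. lborel"
  by standard

lemma poly_null:
  assumes "finite I"
  shows "p \<in> poly_fun I \<Longrightarrow> w0 \<in> space (PiM I (\<lambda>_. lborel)) \<Longrightarrow> p w0 \<noteq> 0 \<Longrightarrow>
    {w \<in> space (PiM I (\<lambda>_. lborel)). p w = 0} \<in> null_sets (PiM I (\<lambda>_. lborel))"
  using assms
proof (induction I arbitrary: p w0 rule: finite_induct)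
  case empty
  then have "{w \<in> space (PiM {} (\<lambda>_. lborel)). p w = 0} = {}"
    by (auto simp: space_PiM)
  then show ?case by (metis emeasure_empty null_setsI sets.empty_sets)
next
  case (insert i I)
  let ?M = "PiM I (\<lambda>_. lborel)"
  let ?M' = "PiM (insert i I) (\<lambda>_. lborel)"
  let ?A = "{w \<in> space ?M'. p w = 0}"
  obtain cs where cs: "\<forall>(c,e)\<in>set cs. c \<in> poly_fun I" "\<forall>w t. p (w(i:=t)) = poly (lpoly cs w) t"
    using pf_decomp[OF insert.prems(1)] by blast
  define w1 where "w1 = w0(i:=undefined)"
  have w1: "w1 \<in> space ?M" using insert.prems(2) insert.hyps(2)
    by (auto simp: space_PiM w1_def PiE_iff extensional_def)
  have "poly (lpoly cs w1) (w0 i) = p w0"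
    using cs(2)[rule_format, of w1 "w0 i"] by (simp add: w1_def)
  then have "lpoly cs w1 \<noteq> 0" using insert.prems(3) by auto
  then obtain k where k: "coeff (lpoly cs w1) k \<noteq> 0"
    by (metis leading_coeff_0_iff)
  have ck: "lcoef cs k \<in> poly_fun I" using cs(1) by (rule lcoef_pf)
  have N: "{w \<in> space ?M. lcoef cs k w = 0} \<in> null_sets ?M"
    using insert.IH[OF ck w1] k by (simp add: coeff_lpoly)
  have pm: "p \<in> borel_measurable ?M'" by (rule pf_meas[OF insert.prems(1)])
  have Asets: "?A \<in> sets ?M'"
  proof -
    have "p -` {0} \<inter> space ?M' \<in> sets ?M'"
      using measurable_sets[OF pm, of "{0}"] by simp
    moreover have "p -` {0} \<inter> space ?M' = ?A" by auto
    ultimately show ?thesis by simp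
  qed
  have AEz: "AE x in ?M. (\<integral>\<^sup>+ t. indicator ?A (x(i:=t)) \<partial>lborel) = 0"
    proof -
    show "AE x in ?M. (\<integral>\<^sup>+ t. indicator ?A (x(i:=t)) \<partial>lborel) = 0"
    proof (rule AE_I'[OF N], safe)
      fix x assume x: "x \<in> space ?M" and ne: "(\<integral>\<^sup>+ t. indicator ?A (x(i:=t)) \<partial>lborel) \<noteq> 0"
      show "lcoef cs k x = 0"
      proof (rule ccontr)
        assume c: "lcoef cs k x \<noteq> 0"
        then have P0: "lpoly cs x \<noteq> 0" using coeff_lpoly[of cs x k] by auto
        define F where "F = {t. poly (lpoly cs x) t = 0}"
        have "finite F" unfolding F_def using P0 by (rule poly_roots_finite)
        then have Fn: "F \<in> null_sets lborel"
          by (intro countable_imp_null_set_lborel) (rule countable_finite)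
        have "\<And>t. indicator ?A (x(i:=t)) = (indicator F t :: ennreal)"
        proof -
          fix t
          have "x(i:=t) \<in> space ?M'" using x by (auto simp: space_PiM PiE_iff extensional_def)
          moreover have "p (x(i:=t)) = poly (lpoly cs x) t" using cs(2) by blast
          ultimately show "indicator ?A (x(i:=t)) = (indicator F t :: ennreal)"
            by (auto simp: indicator_def F_def)
        qed
        then have "(\<integral>\<^sup>+ t. indicator ?A (x(i:=t)) \<partial>lborel) = (\<integral>\<^sup>+ t. indicator F t \<partial>lborel)"
          by simp
        also have "\<dots> = emeasure lborel F"
          by (rule nn_integral_indicator) (rule null_setsD2[OF Fn])
        also have "\<dots> = 0" using Fn by auto
        finally show False using ne by simp
      qed
    qed
  qed
  have "emeasure ?M' ?A = (\<integral>\<^sup>+ w. indicator ?A w \<partial>?M')"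
    using Asets by simp
  also have "\<dots> = (\<integral>\<^sup>+ x. \<integral>\<^sup>+ t. indicator ?A (x(i:=t)) \<partial>lborel \<partial>?M)"
    by (rule lb.product_nn_integral_insert[OF insert.hyps(1,2)]) (use Asets in simp)
  also have "\<dots> = 0"
    using nn_integral_cong_AE[OF AEz] by simp
  finally show ?case using Asets by auto
qed

lemma det_zero_dep:
  assumes "p0 < n" "c p0 \<noteq> 0" "\<forall>s<n. (\<Sum>p<n. c p * G p s) = 0"
  shows "Determinant.det (mat n n (\<lambda>(i,j). G i j)) = (0::real)"
proof -
  let ?A = "mat n n (\<lambda>(i,j). G i j)"
  have A: "?A \<in> carrier_mat n n" by simp
  have At: "transpose_mat ?A \<in> carrier_mat n n" by simp
  let ?v = "vec n c"
  have "?v \<noteq> 0\<^sub>v n"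
  proof
    assume "?v = 0\<^sub>v n"
    then have "?v $ p0 = 0\<^sub>v n $ p0" by simp
    then show False using assms(1,2) by simp
  qed
  moreover have "transpose_mat ?A *\<^sub>v ?v = 0\<^sub>v n"
  proof (rule eq_vecI)
    fix s assume s: "s < dim_vec (0\<^sub>v n :: real vec)"
    then have "(transpose_mat ?A *\<^sub>v ?v) $ s = (\<Sum>p\<in>{0..<n}. G p s * c p)"
      by (simp add: scalar_prod_def)
    also have "\<dots> = 0" using assms(3) s by (simp add: mult.commute lessThan_atLeast0)
    finally show "(transpose_mat ?A *\<^sub>v ?v) $ s = 0\<^sub>v n $ s" using s by simp
  qed simp
  moreover have "?v \<in> carrier_vec n" by simp
  ultimately have "Determinant.det (transpose_mat ?A) = 0"
    using det_0_iff_vec_prod_zero[OF At] by blast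
  then show ?thesis using det_transpose[OF A] by simp
qed

lemma dep:
  fixes y :: "'p \<Rightarrow> 'c \<Rightarrow> real" and e :: "'q \<Rightarrow> 'c \<Rightarrow> real" and lam :: "'p \<Rightarrow> 'q \<Rightarrow> real"
  assumes P: "finite P" and Q: "finite Q" and card: "card Q < card P"
    and y: "\<forall>p\<in>P. \<forall>s. y p s = (\<Sum>q\<in>Q. lam p q * e q s)"
  shows "\<exists>c. (\<exists>p\<in>P. c p \<noteq> 0) \<and> (\<forall>s. (\<Sum>p\<in>P. c p * y p s) = 0)"
proof -
  define n where "n = card P"
  define m where "m = card Q"
  obtain hP where hP: "bij_betw hP {0..<n} P" using ex_bij_betw_nat_finite[OF P] n_def by blast
  obtain hQ where hQ: "bij_betw hQ {0..<m} Q" using ex_bij_betw_nat_finite[OF Q] m_def by blast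
  have mn: "m < n" using card by (simp add: m_def n_def)
  let ?A = "mat n n (\<lambda>(a,b). if b < m then lam (hP a) (hQ b) else 0)"
  have A: "?A \<in> carrier_mat n n" by simp
  have At: "transpose_mat ?A \<in> carrier_mat n n" by simp
  have "Determinant.det ?A = 0"
    unfolding det_0_iff_vec_prod_zero[OF A]
  proof (intro exI conjI)
    show "(unit_vec n m :: real vec) \<in> carrier_vec n" by (simp add: unit_vec_def)
    show "(unit_vec n m :: real vec) \<noteq> 0\<^sub>v n"
    proof
      assume "unit_vec n m = (0\<^sub>v n :: real vec)"
      then have "unit_vec n m $ m = (0\<^sub>v n :: real vec) $ m" by simp
      then show False using mn by simp
    qed
    show "?A *\<^sub>v unit_vec n m = 0\<^sub>v n"
    proof (rule eq_vecI)
      fix a assume a: "a < dim_vec (0\<^sub>v n :: real vec)"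
      have "(?A *\<^sub>v unit_vec n m) $ a = (\<Sum>b\<in>{0..<n}. ?A $$ (a,b) * unit_vec n m $ b)"
        using a by (simp add: scalar_prod_def)
      also have "\<dots> = (\<Sum>b\<in>{0..<n}. 0)"
        using a mn by (intro sum.cong) auto
      finally show "(?A *\<^sub>v unit_vec n m) $ a = 0\<^sub>v n $ a" using a by simp
    qed simp
  qed
  then have "Determinant.det (transpose_mat ?A) = 0" using det_transpose[OF A] by simp
  then obtain v where v: "v \<in> carrier_vec n" "v \<noteq> 0\<^sub>v n" "transpose_mat ?A *\<^sub>v v = 0\<^sub>v n"
    using det_0_iff_vec_prod_zero[OF At] by auto
  have vz: "(\<Sum>a\<in>{0..<n}. lam (hP a) (hQ b) * v $ a) = 0" if b: "b < m" for b
  proof -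
    have "(transpose_mat ?A *\<^sub>v v) $ b = 0" using v(3) b mn by simp
    moreover have "(transpose_mat ?A *\<^sub>v v) $ b = (\<Sum>a\<in>{0..<n}. lam (hP a) (hQ b) * v $ a)"
      using b mn v(1) by (simp add: scalar_prod_def)
    ultimately show ?thesis by simp
  qed
  obtain a0 where a0: "a0 < n" "v $ a0 \<noteq> 0"
  proof -
    have "\<exists>a<n. v $ a \<noteq> 0"
    proof (rule ccontr)
      assume "\<not> (\<exists>a<n. v $ a \<noteq> 0)"
      then have "v = 0\<^sub>v n" using v(1) by (intro eq_vecI) auto
      then show False using v(2) by simp
    qed
    then show thesis using that by blast
  qed
  define c where "c p = v $ (the_inv_into {0..<n} hP p)" for p
  have cinv: "c (hP a) = v $ a" if "a < n" for a
    using that hP unfolding c_def bij_betw_def by (simp add: the_inv_into_f_f)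
  show ?thesis
  proof (intro exI conjI allI)
    show "\<exists>p\<in>P. c p \<noteq> 0"
      using a0 cinv hP by (intro bexI[of _ "hP a0"]) (auto simp: bij_betw_def)
    fix s
    have "(\<Sum>p\<in>P. c p * y p s) = (\<Sum>a\<in>{0..<n}. c (hP a) * y (hP a) s)"
      using sum.reindex_bij_betw[OF hP, of "\<lambda>p. c p * y p s"] by simp
    also have "\<dots> = (\<Sum>a\<in>{0..<n}. v $ a * (\<Sum>b\<in>{0..<m}. lam (hP a) (hQ b) * e (hQ b) s))"
    proof (intro sum.cong refl)
      fix a assume a: "a \<in> {0..<n}"
      then have "hP a \<in> P" using hP by (auto simp: bij_betw_def)
      then have "y (hP a) s = (\<Sum>q\<in>Q. lam (hP a) q * e q s)" using y by blast
      also have "\<dots> = (\<Sum>b\<in>{0..<m}. lam (hP a) (hQ b) * e (hQ b) s)"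
        using sum.reindex_bij_betw[OF hQ, of "\<lambda>q. lam (hP a) q * e q s"] by simp
      finally show "c (hP a) * y (hP a) s = v $ a * (\<Sum>b\<in>{0..<m}. lam (hP a) (hQ b) * e (hQ b) s)"
        using a cinv by simp
    qed
    also have "\<dots> = (\<Sum>b\<in>{0..<m}. e (hQ b) s * (\<Sum>a\<in>{0..<n}. lam (hP a) (hQ b) * v $ a))"
      by (simp add: sum_distrib_left sum_distrib_right algebra_simps sum.swap[of _ "{0..<n}"])
    also have "\<dots> = 0" using vz by simp
    finally show "(\<Sum>p\<in>P. c p * y p s) = 0" .
  qed
qed

lemma templ:
  fixes g :: "nat \<Rightarrow> 'x \<Rightarrow> real"
  assumes indep: "lin_indep_funs M g"
  shows "R \<le> M \<Longrightarrow> \<exists>xs a. \<forall>i\<in>{1..R}. \<forall>\<gamma>\<in>{1..R}.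
            (\<Sum>d=1..M. a \<gamma> d * g d (xs i)) = (if i = \<gamma> then 1 else 0)"
proof (induction R)
  case 0 then show ?case by auto
next
  case (Suc R)
  then obtain xs a where IH: "\<forall>i\<in>{1..R}. \<forall>\<gamma>\<in>{1..R}.
            (\<Sum>d=1..M. a \<gamma> d * g d (xs i)) = (if i = \<gamma> then 1 else 0)" by auto
  define h where "h \<gamma> x = (\<Sum>d=1..M. a \<gamma> d * g d x)" for \<gamma> x
  have hxs: "h \<gamma> (xs i) = (if i = \<gamma> then 1 else 0)" if "i \<in> {1..R}" "\<gamma> \<in> {1..R}" for i \<gamma>
    using IH that h_def by auto
  have "\<exists>d0\<in>{1..M}. \<exists>x0. g d0 x0 \<noteq> (\<Sum>\<gamma>=1..R. g d0 (xs \<gamma>) * h \<gamma> x0)"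
  proof (rule ccontr)
    assume "\<not> ?thesis"
    then have all: "\<forall>d\<in>{1..M}. \<forall>x. g d x = (\<Sum>\<gamma>\<in>{1..R}. g d (xs \<gamma>) * h \<gamma> x)" by auto
    obtain c where c: "\<exists>p\<in>{1..M}. c p \<noteq> 0" "\<forall>s. (\<Sum>p\<in>{1..M}. c p * g p s) = 0"
      using dep[OF _ _ _ all] Suc.prems by auto
    then show False using indep unfolding lin_indep_funs_def by blast
  qed
  then obtain d0 x0 where d0: "d0 \<in> {1..M}" and x0: "g d0 x0 \<noteq> (\<Sum>\<gamma>=1..R. g d0 (xs \<gamma>) * h \<gamma> x0)"
    by blast
  define D0 where "D0 = g d0 x0 - (\<Sum>\<gamma>=1..R. g d0 (xs \<gamma>) * h \<gamma> x0)"
  have D0: "D0 \<noteq> 0" using x0 D0_def by simp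
  define \<nu> where "\<nu> d = ((if d = d0 then 1 else 0) - (\<Sum>\<gamma>=1..R. g d0 (xs \<gamma>) * a \<gamma> d)) / D0" for d
  define hn where "hn x = (g d0 x - (\<Sum>\<gamma>=1..R. g d0 (xs \<gamma>) * h \<gamma> x)) / D0" for x
  have hn: "(\<Sum>d=1..M. \<nu> d * g d x) = hn x" for x
  proof -
    have "(\<Sum>d=1..M. \<nu> d * g d x) =
      ((\<Sum>d=1..M. (if d = d0 then 1 else 0) * g d x) - (\<Sum>d=1..M. (\<Sum>\<gamma>=1..R. g d0 (xs \<gamma>) * a \<gamma> d) * g d x)) / D0"
      unfolding \<nu>_def by (simp add: sum_divide_distrib[symmetric] sum_subtractf[symmetric] algebra_simps)
    also have "(\<Sum>d=1..M. (if d = d0 then 1 else 0) * g d x) = g d0 x"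
    proof -
      have "(\<Sum>d=1..M. (if d = d0 then 1 else 0) * g d x) = (\<Sum>d=1..M. if d = d0 then g d x else 0)"
        by (intro sum.cong) auto
      also have "\<dots> = g d0 x" using d0 by simp
      finally show ?thesis .
    qed
    also have "(\<Sum>d=1..M. (\<Sum>\<gamma>=1..R. g d0 (xs \<gamma>) * a \<gamma> d) * g d x) = (\<Sum>\<gamma>=1..R. g d0 (xs \<gamma>) * h \<gamma> x)"
      unfolding h_def by (simp add: sum_distrib_left sum_distrib_right algebra_simps) (rule sum.swap)
    finally show ?thesis unfolding hn_def .
  qed
  have hn_x0: "hn x0 = 1" using D0 unfolding hn_def D0_def by simp
  have hn_xs: "hn (xs i) = 0" if i: "i \<in> {1..R}" for i
  proof -
    have "(\<Sum>\<gamma>=1..R. g d0 (xs \<gamma>) * h \<gamma> (xs i)) = (\<Sum>\<gamma>=1..R. if \<gamma> = i then g d0 (xs \<gamma>) else 0)"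
      using i by (intro sum.cong) (auto simp: hxs)
    also have "\<dots> = g d0 (xs i)" using i by simp
    finally show ?thesis unfolding hn_def by simp
  qed
  define a' where "a' \<gamma> d = (if \<gamma> = Suc R then \<nu> d else a \<gamma> d - h \<gamma> x0 * \<nu> d)" for \<gamma> d
  define xs' where "xs' = xs(Suc R := x0)"
  have a'1: "(\<Sum>d=1..M. a' (Suc R) d * g d x) = hn x" for x
    using hn by (simp add: a'_def)
  have a'2: "(\<Sum>d=1..M. a' \<gamma> d * g d x) = h \<gamma> x - h \<gamma> x0 * hn x" if "\<gamma> \<noteq> Suc R" for \<gamma> x
  proof -
    have "(\<Sum>d=1..M. a' \<gamma> d * g d x) = (\<Sum>d=1..M. a \<gamma> d * g d x - h \<gamma> x0 * (\<nu> d * g d x))"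
      using that by (intro sum.cong) (auto simp: a'_def algebra_simps)
    also have "\<dots> = h \<gamma> x - h \<gamma> x0 * (\<Sum>d=1..M. \<nu> d * g d x)"
      by (simp add: sum_subtractf sum_distrib_left h_def)
    also have "\<dots> = h \<gamma> x - h \<gamma> x0 * hn x" by (simp only: hn)
    finally show ?thesis .
  qed
  show ?case
  proof (intro exI ballI)
    fix i \<gamma> assume i: "i \<in> {1..Suc R}" and \<gamma>: "\<gamma> \<in> {1..Suc R}"
    show "(\<Sum>d=1..M. a' \<gamma> d * g d (xs' i)) = (if i = \<gamma> then 1 else 0)"
    proof (cases "\<gamma> = Suc R")
      case True
      show ?thesis unfolding True a'1
        using i hn_x0 hn_xs by (cases "i = Suc R") (auto simp: xs'_def)
    next
      case False
      then have \<gamma>R: "\<gamma> \<in> {1..R}" using \<gamma> by auto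
      show ?thesis
      proof (cases "i = Suc R")
        case True
        then show ?thesis unfolding a'2[OF \<open>\<gamma> \<noteq> Suc R\<close>] using False by (simp add: xs'_def hn_x0)
      next
        case False
        then have "i \<in> {1..R}" using i by auto
        then show ?thesis unfolding a'2[OF \<open>\<gamma> \<noteq> Suc R\<close>] using \<gamma>R False
          by (simp add: xs'_def hn_xs hxs)
      qed
    qed
  qed
qed

lemma pow2_div: "l \<le> L \<Longrightarrow> (2::nat)^L div 2^l = 2^(L-l)"
  by (metis le_add_diff_inverse nonzero_mult_div_cancel_left power_add power_not_zero zero_neq_numeral)

lemma deep_u_agree:
  assumes agree: "\<forall>k\<in>deep_weight_idx M r L Y. w k = w' k"
  shows "l \<le> L - 1 \<Longrightarrow> j \<in> {1..2^(L-l)} \<Longrightarrow> \<gamma> \<in> {1..r l} \<Longrightarrow>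
    deep_u \<sigma> P f \<theta> M r w X l j \<gamma> = deep_u \<sigma> P f \<theta> M r w' X l j \<gamma>"
proof (induction l arbitrary: j \<gamma>)
  case 0
  have "\<forall>d\<in>{1..M}. w (0, j, \<gamma>, d) = w' (0, j, \<gamma>, d)"
    using 0 agree by (auto simp: deep_weight_idx_def)
  then show ?case by simp
next
  case (Suc l)
  have L: "Suc l \<le> L" using Suc.prems(1) by simp
  have jd: "2^L div 2^(Suc l) = (2::nat)^(L - Suc l)" using pow2_div[OF L] .
  have ws: "\<forall>\<alpha>\<in>{1..r l}. w (Suc l, j, \<gamma>, \<alpha>) = w' (Suc l, j, \<gamma>, \<alpha>)"
    using Suc.prems agree jd by (auto simp: deep_weight_idx_def)
  have e: "(2::nat) ^ (L - l) = 2 * 2 ^ (L - Suc l)"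
    using L by (metis Suc_diff_le diff_Suc_Suc diff_le_self le_SucE power_Suc Suc_le_lessD  le_imp_less_Suc Suc_diff_Suc)
  have c1: "2*j - 1 \<in> {1..2^(L-l)}" "2*j \<in> {1..2^(L-l)}" using Suc.prems(2) e by auto
  have IH: "\<forall>\<alpha>\<in>{1..r l}. deep_u \<sigma> P f \<theta> M r w X l (2*j-1) \<alpha> = deep_u \<sigma> P f \<theta> M r w' X l (2*j-1) \<alpha>
       \<and> deep_u \<sigma> P f \<theta> M r w X l (2*j) \<alpha> = deep_u \<sigma> P f \<theta> M r w' X l (2*j) \<alpha>"
    using Suc.IH c1 Suc.prems(1) by auto
  show ?case using ws IH by simp
qed

lemma deep_score_agree:
  assumes agree: "\<forall>k\<in>deep_weight_idx M r L Y. w k = w' k" and L: "L \<ge> 1" and y: "y \<in> {1..Y}"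
  shows "deep_score \<sigma> P f \<theta> M r L w y X = deep_score \<sigma> P f \<theta> M r L w' y X"
proof -
  have ws: "\<forall>\<alpha>\<in>{1..r (L-1)}. w (L, 1, y, \<alpha>) = w' (L, 1, y, \<alpha>)"
    using agree y by (auto simp: deep_weight_idx_def)
  have two: "(2::nat)^(L - (L-1)) = 2" using L by simp
  have "\<forall>\<alpha>\<in>{1..r (L-1)}. deep_v \<sigma> P f \<theta> M r w X (L-1) 1 \<alpha> = deep_v \<sigma> P f \<theta> M r w' X (L-1) 1 \<alpha>"
  proof
    fix \<alpha> assume a: "\<alpha> \<in> {1..r (L-1)}"
    have "deep_u \<sigma> P f \<theta> M r w X (L-1) j \<alpha> = deep_u \<sigma> P f \<theta> M r w' X (L-1) j \<alpha>" if "j \<in> {1..2}" for j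
      using deep_u_agree[OF agree, of "L-1" j \<alpha>] two that a by auto
    then show "deep_v \<sigma> P f \<theta> M r w X (L-1) 1 \<alpha> = deep_v \<sigma> P f \<theta> M r w' X (L-1) 1 \<alpha>"
      unfolding deep_v_def by simp
  qed
  then show ?thesis unfolding deep_score_def using ws by simp
qed

lemma pf_restrict: "(\<lambda>w. restrict w I k) \<in> poly_fun I"
  by (cases "k \<in> I") (auto intro: poly_fun.intros)

lemma deep_u_pf:
  "(\<lambda>w. deep_u (\<lambda>z. z) (*) f \<theta> M r (restrict w I) X l j \<gamma>) \<in> poly_fun I"
proof (induction l arbitrary: j \<gamma>)
  case 0
  show ?case unfolding deep_u.simps by (intro pf_sum pf_mult pf_restrict pf_const)
next
  case (Suc l)
  show ?case unfolding deep_u.simps by (intro pf_sum pf_mult pf_restrict pf_const Suc.IH)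
qed

lemma deep_score_pf:
  "(\<lambda>w. deep_score (\<lambda>z. z) (*) f \<theta> M r L (restrict w I) y X) \<in> poly_fun I"
  unfolding deep_score_def deep_v_def
  by (intro pf_sum pf_mult pf_restrict pf_const deep_u_pf)

lemma det_pf:
  assumes "\<And>i j. E i j \<in> poly_fun I"
  shows "(\<lambda>w. Determinant.det (mat n n (\<lambda>(i,j). E i j w))) \<in> poly_fun I"
proof -
  have "Determinant.det (mat n n (\<lambda>(i,j). E i j w)) =
     (\<Sum>p\<in>{p. p permutes {0..<n}}. of_int (sign p) * (\<Prod>i\<in>{0..<n}. E i (p i) w))" for w
    unfolding det_def'[OF mat_carrier]
  proof (intro sum.cong refl arg_cong2[where f="(*)"] prod.cong)
    fix p i assume "p \<in> {p. p permutes {0..<n}}" "i \<in> {0..<n}"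
    then have "p i < n" by (auto dest: permutes_in_image)
    then show "mat n n (\<lambda>(i, j). E i j w) $$ (i, p i) = E i (p i) w" using \<open>i \<in> _\<close> by simp
  qed
  then show ?thesis
    by (simp only:) (intro pf_sum pf_mult pf_prod pf_const assms)
qed

lemma lvl0:
  assumes bio: "\<forall>i\<in>{1..R}. \<forall>\<gamma>\<in>{1..R}. (\<Sum>d=1..M. a \<gamma> d * f (\<theta> d) (xs i)) = (if i = \<gamma> then 1 else 0)"
    and T: "\<forall>i. T i \<in> {1..R}" and X: "\<forall>i. X i = xs (T i)"
    and w0: "\<forall>j \<gamma> d. w0 (0,j,\<gamma>,d) = (if \<gamma> \<le> R then a \<gamma> d else 0)"
    and g: "\<gamma> \<ge> 1"
  shows "deep_u (\<lambda>z. z) (*) f \<theta> M r w0 X 0 j \<gamma> = (if T j = \<gamma> then 1 else 0)"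
proof (cases "\<gamma> \<le> R")
  case True
  then show ?thesis using bio T X w0 g by simp
next
  case False
  then show ?thesis using T w0 by auto
qed

lemma sum_ind: "finite S \<Longrightarrow> a \<in> S \<Longrightarrow> (\<Sum>k\<in>S. if k = a then (1::real) else 0) = 1"
  by simp

lemma sum_lvl1:
  fixes t1 t2 R r0 :: nat
  assumes "t1 \<in> {1..R}" "R \<le> r0"
  shows "(\<Sum>\<alpha>=1..r0. (if \<alpha> \<le> R then 1 else 0) * ((if t1 = \<alpha> then 1 else 0) * (if t2 = \<alpha> then 1 else 0)))
     = (if t1 = t2 then (1::real) else 0)"
proof -
  have "(\<Sum>\<alpha>=1..r0. (if \<alpha> \<le> R then 1 else 0) * ((if t1 = \<alpha> then 1 else 0) * (if t2 = \<alpha> then 1 else 0)))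
     = (\<Sum>\<alpha>=1..r0. if \<alpha> = t1 then (if t1 = t2 then (1::real) else 0) else 0)"
    using assms by (intro sum.cong) auto
  also have "\<dots> = (if t1 = t2 then 1 else 0)"
  proof (cases "t1 = t2")
    case True
    have "t1 \<in> {1..r0}" using assms by auto
    then show ?thesis using True by (simp add: sum_ind)
  qed simp
  finally show ?thesis .
qed

lemma sum_delta1:
  assumes "rr \<ge> (1::nat)"
  shows "(\<Sum>\<alpha>=1..rr. (if \<alpha> = 1 then 1 else 0) * F \<alpha>) = (F 1 :: real)"
proof -
  have "(\<Sum>\<alpha>=1..rr. (if \<alpha> = 1 then 1 else 0) * F \<alpha>) = (\<Sum>\<alpha>=1..rr. if \<alpha> = 1 then F \<alpha> else 0)"
    by (intro sum.cong) auto
  also have "\<dots> = F 1" using assms by simp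
  finally show ?thesis .
qed

lemma lvl:
  assumes u0: "\<forall>j \<gamma>. \<gamma> \<ge> 1 \<longrightarrow> deep_u (\<lambda>z. z) (*) f \<theta> M r w0 X 0 j \<gamma> = (if T j = \<gamma> then 1 else 0)"
    and T: "\<forall>i. T i \<in> {1..R}" and Rr: "R \<le> r 0" and r: "\<forall>l<L. r l \<ge> 1"
    and w1: "\<forall>j \<gamma> \<alpha>. w0 (1,j,\<gamma>,\<alpha>) = (if \<alpha> \<le> R then 1 else 0)"
    and w2: "\<forall>l j \<gamma> \<alpha>. l \<ge> 2 \<longrightarrow> w0 (l,j,\<gamma>,\<alpha>) = (if \<alpha> = 1 then 1 else 0)"
  shows "1 \<le> l \<Longrightarrow> l < L \<Longrightarrow> j \<ge> 1 \<Longrightarrow> deep_u (\<lambda>z. z) (*) f \<theta> M r w0 X l j 1 =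
     (\<Prod>k\<in>{(j-1)*2^(l-1)..<j*2^(l-1)}. if T(2*k+1) = T(2*k+2) then 1 else 0)"
proof (induction l arbitrary: j)
  case 0 then show ?case by simp
next
  case (Suc l)
  show ?case
  proof (cases "l = 0")
    case True
    have "deep_u (\<lambda>z. z) (*) f \<theta> M r w0 X (Suc l) j 1 =
      (\<Sum>\<alpha>=1..r 0. (if \<alpha> \<le> R then 1 else 0) * ((if T (2*j-1) = \<alpha> then 1 else 0) * (if T (2*j) = \<alpha> then 1 else 0)))"
      using True u0 w1 by simp
    also have "\<dots> = (if T (2*j-1) = T (2*j) then 1 else 0)"
      using T Rr by (intro sum_lvl1) auto
    also have "\<dots> = (\<Prod>k\<in>{(j-1)*2^(Suc l-1)..<j*2^(Suc l-1)}. if T(2*k+1) = T(2*k+2) then 1 else 0)"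
    proof -
      have "{(j-1)*2^(Suc l-1)..<j*2^(Suc l-1)} = {j-1}" using True Suc.prems by auto
      moreover have "2*(j-1)+1 = 2*j-1" "2*(j-1)+2 = 2*j" using Suc.prems by auto
      ultimately show ?thesis by simp
    qed
    finally show ?thesis .
  next
    case False
    have rl: "r l \<ge> 1" using r Suc.prems by auto
    let ?u = "\<lambda>j. deep_u (\<lambda>z. z) (*) f \<theta> M r w0 X l j 1"
    let ?F = "\<lambda>k. if T(2*k+1) = T(2*k+2) then (1::real) else 0"
    have p: "(2::nat)^l = 2 * 2^(l-1)" using False by (cases l) auto
    have s0: "deep_u (\<lambda>z. z) (*) f \<theta> M r w0 X (Suc l) j 1 =
      (\<Sum>\<alpha>=1..r l. (if \<alpha> = 1 then 1 else 0) * (deep_u (\<lambda>z. z) (*) f \<theta> M r w0 X l (2*j-1) \<alpha> * deep_u (\<lambda>z. z) (*) f \<theta> M r w0 X l (2*j) \<alpha>))"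
      using False w2 by simp
    have s1: "deep_u (\<lambda>z. z) (*) f \<theta> M r w0 X (Suc l) j 1 = ?u (2*j-1) * ?u (2*j)"
      unfolding s0 by (rule sum_delta1[OF rl])
    have e1: "(2*j-1-1)*2^(l-1) = (j-1)*2^l"
    proof -
      have "(2*j-1-1) = 2*(j-1)" by simp
      then show ?thesis using p by (simp only: mult.assoc mult.commute[of 2])
    qed
    have e2: "(2*j)*2^(l-1) = j*2^l" using p by (simp only: mult.assoc mult.commute[of 2])
    have s2: "?u (2*j-1) = (\<Prod>k\<in>{(j-1)*2^l..<(2*j-1)*2^(l-1)}. ?F k)"
      unfolding e1[symmetric] by (rule Suc.IH) (use Suc.prems False in auto)
    have s3: "?u (2*j) = (\<Prod>k\<in>{(2*j-1)*2^(l-1)..<j*2^l}. ?F k)"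
    proof -
      have "?u (2*j) = (\<Prod>k\<in>{(2*j-1)*2^(l-1)..<(2*j)*2^(l-1)}. ?F k)"
        by (rule Suc.IH) (use Suc.prems False in auto)
      then show ?thesis by (simp only: e2)
    qed
    have s4: "(\<Prod>k\<in>{(j-1)*2^l..<(2*j-1)*2^(l-1)}. ?F k) * (\<Prod>k\<in>{(2*j-1)*2^(l-1)..<j*2^l}. ?F k)
       = (\<Prod>k\<in>{(j-1)*2^l..<j*2^l}. ?F k)"
    proof (rule prod.atLeastLessThan_concat)
      show "(j-1)*2^l \<le> (2*j-1)*2^(l-1)" unfolding e1[symmetric] by (rule mult_le_mono1) simp
      show "(2*j-1)*2^(l-1) \<le> j*2^l" unfolding e2[symmetric] by (rule mult_le_mono1) simp
    qed
    show ?thesis by (simp only: s1 s2 s3 s4 diff_Suc_1)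
  qed
qed


lemma score_w0:
  assumes u0: "\<forall>j \<gamma>. \<gamma> \<ge> 1 \<longrightarrow> deep_u (\<lambda>z. z) (*) f \<theta> M r w0 X 0 j \<gamma> = (if T j = \<gamma> then 1 else 0)"
    and T: "\<forall>i. T i \<in> {1..R}" and Rr: "R \<le> r 0" and r: "\<forall>l<L. r l \<ge> 1" and L: "L \<ge> 1"
    and w1: "\<forall>j \<gamma> \<alpha>. w0 (1,j,\<gamma>,\<alpha>) = (if \<alpha> \<le> R then 1 else 0)"
    and w2: "\<forall>l j \<gamma> \<alpha>. l \<ge> 2 \<longrightarrow> w0 (l,j,\<gamma>,\<alpha>) = (if \<alpha> = 1 then 1 else 0)"
  shows "deep_score (\<lambda>z. z) (*) f \<theta> M r L w0 y X =
     (\<Prod>k<2^(L-1). if T(2*k+1) = T(2*k+2) then 1 else 0)"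
proof (cases "L = 1")
  case True
  have "deep_score (\<lambda>z. z) (*) f \<theta> M r L w0 y X =
     (\<Sum>\<alpha>=1..r 0. (if \<alpha> \<le> R then 1 else 0) * ((if T 1 = \<alpha> then 1 else 0) * (if T 2 = \<alpha> then 1 else 0)))"
    unfolding deep_score_def deep_v_def using True u0 w1 by simp
  also have "\<dots> = (if T 1 = T 2 then 1 else 0)" using T Rr by (intro sum_lvl1) auto
  moreover have "T 2 = T (Suc (Suc 0))" by (simp add: numeral_2_eq_2)
  ultimately show ?thesis using True by simp
next
  case False
  let ?u = "\<lambda>j. deep_u (\<lambda>z. z) (*) f \<theta> M r w0 X (L-1) j 1"
  let ?F = "\<lambda>k. if T(2*k+1) = T(2*k+2) then (1::real) else 0"
  have rl: "r (L-1) \<ge> 1" using r L by auto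
  have lv: "?u j = (\<Prod>k\<in>{(j-1)*2^(L-1-1)..<j*2^(L-1-1)}. ?F k)" if "j \<ge> 1" for j
    using lvl[OF u0 T Rr r w1 w2, of "L-1" j] False L that by simp
  have "deep_score (\<lambda>z. z) (*) f \<theta> M r L w0 y X =
     (\<Sum>\<alpha>=1..r (L-1). (if \<alpha> = 1 then 1 else 0) * deep_v (\<lambda>z. z) (*) f \<theta> M r w0 X (L-1) 1 \<alpha>)"
    unfolding deep_score_def using False L w2 by simp
  also have "\<dots> = ?u 1 * ?u 2"
    unfolding sum_delta1[OF rl] by (simp add: deep_v_def)
  also have "\<dots> = (\<Prod>k\<in>{0..<2^(L-1-1)}. ?F k) * (\<Prod>k\<in>{2^(L-1-1)..<2*2^(L-1-1)}. ?F k)"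
    using lv[of 1] lv[of 2] by simp
  also have "\<dots> = (\<Prod>k\<in>{0..<2*2^(L-1-1)}. ?F k)"
    by (rule prod.atLeastLessThan_concat) auto
  also have "2*2^(L-1-1) = (2::nat)^(L-1)" using False L
    by (cases L) (auto simp: power_Suc[symmetric] simp del: power_Suc)
  finally show ?thesis by (simp add: lessThan_atLeast0)
qed

lemma dig_inj:
  fixes R :: nat
  assumes "0 < R"
  shows "\<rho> < R^K \<Longrightarrow> \<sigma> < R^K \<Longrightarrow> \<forall>k<K. \<rho> div R^k mod R = \<sigma> div R^k mod R \<Longrightarrow> \<rho> = \<sigma>"
proof (induction K arbitrary: \<rho> \<sigma>)
  case 0 then show ?case by simp
next
  case (Suc K)
  have "\<rho> mod R = \<sigma> mod R" using Suc.prems(3) by (metis div_by_1 power_0 zero_less_Suc)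
  moreover have "\<rho> div R = \<sigma> div R"
  proof (rule Suc.IH)
    show "\<rho> div R < R^K" "\<sigma> div R < R^K" using Suc.prems(1,2) assms
      by (simp_all add: less_mult_imp_div_less mult.commute)
    show "\<forall>k<K. \<rho> div R div R ^ k mod R = \<sigma> div R div R ^ k mod R"
      using Suc.prems(3) by (auto simp: div_mult2_eq[symmetric] simp flip: power_Suc)
  qed
  ultimately show ?case by (metis div_mult_mod_eq)
qed

lemma shallow_det0:
  fixes xs :: "nat \<Rightarrow> 'x" and R K Z :: nat and dig :: "nat \<Rightarrow> nat \<Rightarrow> nat"
  assumes R: "R \<ge> 1" and K: "K \<ge> 1" and card: "Z*(K*R) < R^K"
    and dig: "\<forall>\<rho> k. dig \<rho> k \<in> {1..R}"
    and XX: "\<forall>\<rho> \<sigma> k. XX \<rho> \<sigma> (2*k+1) = xs (dig \<rho> k) \<and> XX \<rho> \<sigma> (2*k+2) = xs (dig \<sigma> k)"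
  shows "Determinant.det (mat (R^K) (R^K) (\<lambda>(\<rho>,\<sigma>). shallow_relu_max f \<phi> M (2*K) Z a b (XX \<rho> \<sigma>))) = 0"
proof -
  define n where "n = R^K"
  have Kne: "{..<K} \<noteq> {}"
  proof -
    have "0 \<in> {..<K}" using K by simp
    then show ?thesis by blast
  qed
  define So where "So z \<rho> k = max 0 (\<Sum>d=1..M. a z (2*k+1) d * f (\<phi> d) (xs (dig \<rho> k)))" for z \<rho> k
  define Se where "Se z \<sigma> k = max 0 (\<Sum>d=1..M. a z (2*k+2) d * f (\<phi> d) (xs (dig \<sigma> k)))" for z \<sigma> k
  define U where "U z \<rho> = Max (So z \<rho> ` {..<K})" for z \<rho>
  define V where "V z \<sigma> = Max (Se z \<sigma> ` {..<K})" for z \<sigma>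
  define \<kappa> where "\<kappa> z \<rho> = (SOME k. k < K \<and> U z \<rho> = So z \<rho> k)" for z \<rho>
  have \<kappa>: "\<kappa> z \<rho> < K \<and> U z \<rho> = So z \<rho> (\<kappa> z \<rho>)" for z \<rho>
  proof -
    have "U z \<rho> \<in> So z \<rho> ` {..<K}" unfolding U_def using Kne by (intro Max_in) auto
    then have "\<exists>k. k < K \<and> U z \<rho> = So z \<rho> k" by auto
    then show ?thesis unfolding \<kappa>_def by (rule someI_ex)
  qed
  have split: "{1..2*K} = (\<lambda>k. 2*k+1) ` {..<K} \<union> (\<lambda>k. 2*k+2) ` {..<K}"
  proof (rule subset_antisym; rule subsetI)
    fix i assume i: "i \<in> {1..2*K}"
    show "i \<in> (\<lambda>k. 2*k+1) ` {..<K} \<union> (\<lambda>k. 2*k+2) ` {..<K}"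
    proof (cases "odd i")
      case True
      then obtain k where "i = 2*k+1" by (metis oddE)
      then show ?thesis using i by auto
    next
      case False
      then obtain k where k: "i = 2*k" by (metis evenE)
      then have "k \<ge> 1" using i by auto
      then have "i = 2*(k-1)+2" "k - 1 < K" using k i by auto
      then show ?thesis by blast
    qed
  qed auto
  have maxeq: "Max ((\<lambda>i. max 0 (\<Sum>d=1..M. a z i d * f (\<phi> d) (XX \<rho> \<sigma> i))) ` {1..2*K}) = max (U z \<rho>) (V z \<sigma>)"
    for z \<rho> \<sigma>
  proof -
    have "(\<lambda>i. max 0 (\<Sum>d=1..M. a z i d * f (\<phi> d) (XX \<rho> \<sigma> i))) ` {1..2*K} = So z \<rho> ` {..<K} \<union> Se z \<sigma> ` {..<K}"
      unfolding split image_Un image_image So_def Se_def using XX by simp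
    then show ?thesis unfolding U_def V_def using Kne by (simp add: Max_Un)
  qed
  define Q where "Q = {1..Z} \<times> ({..<K} \<times> {1..R})"
  define lam where "lam \<rho> q = (if snd q = (\<kappa> (fst q) \<rho>, dig \<rho> (\<kappa> (fst q) \<rho>)) then b (fst q) else 0)" for \<rho> q
  define e where "e q \<sigma> = max (max 0 (\<Sum>d=1..M. a (fst q) (2*fst (snd q)+1) d * f (\<phi> d) (xs (snd (snd q))))) (V (fst q) \<sigma>)" for q \<sigma>
  define y where "y \<rho> \<sigma> = shallow_relu_max f \<phi> M (2*K) Z a b (XX \<rho> \<sigma>)" for \<rho> \<sigma>
  have yrep: "\<forall>p\<in>{0..<n}. \<forall>s. y p s = (\<Sum>q\<in>Q. lam p q * e q s)"
  proof (intro ballI allI)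
    fix \<rho> \<sigma>
    have "y \<rho> \<sigma> = (\<Sum>z=1..Z. b z * max (U z \<rho>) (V z \<sigma>))"
      unfolding y_def shallow_relu_max_def maxeq ..
    also have "\<dots> = (\<Sum>z\<in>{1..Z}. \<Sum>u\<in>{..<K} \<times> {1..R}. lam \<rho> (z,u) * e (z,u) \<sigma>)"
    proof (rule sum.cong[OF refl])
      fix z assume z: "z \<in> {1..Z}"
      have mem: "(\<kappa> z \<rho>, dig \<rho> (\<kappa> z \<rho>)) \<in> {..<K} \<times> {1..R}" using \<kappa> dig by auto
      have "(\<Sum>u\<in>{..<K} \<times> {1..R}. lam \<rho> (z,u) * e (z,u) \<sigma>) =
         (\<Sum>u\<in>{..<K} \<times> {1..R}. if u = (\<kappa> z \<rho>, dig \<rho> (\<kappa> z \<rho>)) then b z * e (z, (\<kappa> z \<rho>, dig \<rho> (\<kappa> z \<rho>))) \<sigma> else 0)"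
        unfolding lam_def by (intro sum.cong) auto
      also have "\<dots> = b z * e (z, (\<kappa> z \<rho>, dig \<rho> (\<kappa> z \<rho>))) \<sigma>" using mem by simp
      also have "e (z, (\<kappa> z \<rho>, dig \<rho> (\<kappa> z \<rho>))) \<sigma> = max (U z \<rho>) (V z \<sigma>)"
        unfolding e_def using \<kappa>[of z \<rho>] by (simp add: So_def)
      finally show "b z * max (U z \<rho>) (V z \<sigma>) = (\<Sum>u\<in>{..<K} \<times> {1..R}. lam \<rho> (z,u) * e (z,u) \<sigma>)" by simp
    qed
    also have "\<dots> = (\<Sum>q\<in>Q. lam \<rho> q * e q \<sigma>)"
      unfolding Q_def by (rule sum.cartesian_product'[symmetric])
    finally show "y \<rho> \<sigma> = (\<Sum>q\<in>Q. lam \<rho> q * e q \<sigma>)" .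
  qed
  have cardQ: "card Q < card {0..<n}" using card unfolding Q_def n_def by (simp add: card_cartesian_product)
  obtain c where c: "\<exists>p\<in>{0..<n}. c p \<noteq> 0" "\<forall>s. (\<Sum>p\<in>{0..<n}. c p * y p s) = 0"
    using dep[OF _ _ cardQ yrep] unfolding Q_def by auto
  then obtain p0 where "p0 < n" "c p0 \<noteq> 0" by auto
  have "Determinant.det (mat n n (\<lambda>(i,j). y i j)) = 0"
    by (rule det_zero_dep[of p0 n c y, OF \<open>p0 < n\<close> \<open>c p0 \<noteq> 0\<close>]) (use c(2) in \<open>simp add: lessThan_atLeast0\<close>)
  then show ?thesis unfolding y_def n_def .
qed

lemma finite_idx: "finite (deep_weight_idx M r L Y)"
proof -
  define B where "B = M + Y + (\<Sum>l\<le>L. r l)"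
  have rl: "r l \<le> B" if "l \<le> L" for l
  proof -
    have "r l \<le> (\<Sum>l\<le>L. r l)" using that by (intro member_le_sum) auto
    then show ?thesis unfolding B_def by simp
  qed
  have jl: "(2::nat)^L div 2^l \<le> 2^L" for l by (rule div_le_dividend)
  have "deep_weight_idx M r L Y \<subseteq> {..L} \<times> {..2^L} \<times> {..B} \<times> {..B}"
  proof
    fix x assume x: "x \<in> deep_weight_idx M r L Y"
    obtain l j \<gamma> \<alpha> where xe: "x = (l, j, \<gamma>, \<alpha>)" by (cases x) auto
    show "x \<in> {..L} \<times> {..2^L} \<times> {..B} \<times> {..B}"
    proof -
      have c: "(l = 0 \<and> j \<in> {1..2^L} \<and> \<gamma> \<in> {1..r 0} \<and> \<alpha> \<in> {1..M}) \<or>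
         (l \<in> {1..L-1} \<and> j \<in> {1..2^L div 2^l} \<and> \<gamma> \<in> {1..r l} \<and> \<alpha> \<in> {1..r (l-1)}) \<or>
         (l = L \<and> j = 1 \<and> \<gamma> \<in> {1..Y} \<and> \<alpha> \<in> {1..r (L-1)})"
        using x unfolding xe deep_weight_idx_def by auto
      have MB: "M \<le> B" "Y \<le> B" by (simp_all add: B_def)
      have "l \<le> L \<and> j \<le> 2^L \<and> \<gamma> \<le> B \<and> \<alpha> \<le> B"
        using c
      proof (elim disjE)
        assume h: "l = 0 \<and> j \<in> {1..2^L} \<and> \<gamma> \<in> {1..r 0} \<and> \<alpha> \<in> {1..M}"
        show ?thesis using h rl[of 0] MB by auto
      next
        assume h: "l \<in> {1..L-1} \<and> j \<in> {1..2^L div 2^l} \<and> \<gamma> \<in> {1..r l} \<and> \<alpha> \<in> {1..r (l-1)}"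
        have "r l \<le> B" "r (l-1) \<le> B" using h by (auto intro: rl)
        moreover have "j \<le> 2^L" using h jl[of l] by (meson atLeastAtMost_iff le_trans)
        ultimately show ?thesis using h by auto
      next
        assume h: "l = L \<and> j = 1 \<and> \<gamma> \<in> {1..Y} \<and> \<alpha> \<in> {1..r (L-1)}"
        have "r (L-1) \<le> B" by (auto intro: rl)
        then show ?thesis using h MB by auto
      qed
      then show ?thesis unfolding xe by auto
    qed
  qed
  then show ?thesis by (rule finite_subset) auto
qed

lemma bound_nat:
  fixes Z M K R :: nat
  assumes "real Z < real R ^ K * (2 / (real M * real (2*K)))" "M > 0" "K > 0" "R \<le> M"
  shows "Z * (K * R) < R ^ K"
proof -
  have "real Z * (real M * real K) < real R ^ K"
    using assms(1-3) by (simp add: field_simps)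
  then have "Z * M * K < R ^ K"
    by (metis of_nat_less_iff of_nat_mult of_nat_power mult.assoc)
  moreover have "Z * (K * R) \<le> Z * M * K" using assms(4) by simp
  ultimately show ?thesis by linarith
qed

theorem claim11:
  fixes \<Theta> :: "'p::topological_space set"
    and f :: "'p \<Rightarrow> real^'s \<Rightarrow> real"
    and L M Y y :: nat
    and r :: "nat \<Rightarrow> nat"
    and \<theta> :: "nat \<Rightarrow> 'p"
    and Pr :: "(nat \<times> nat \<times> nat \<times> nat \<Rightarrow> real) measure"
  assumes F: "rep_family \<Theta> f"
    and L: "L \<ge> 1"
    and r: "\<forall>l<L. r l \<ge> 1"
    and y: "y \<in> {1..Y}"
    and \<theta>: "\<forall>d\<in>{1..M}. \<theta> d \<in> \<Theta>"
    and indep: "lin_indep_funs M (\<lambda>d. f (\<theta> d))"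
    and prob: "prob_space Pr"
    and sets: "sets Pr = sets (PiM (deep_weight_idx M r L Y) (\<lambda>_. lborel))"
    and ac: "absolutely_continuous (PiM (deep_weight_idx M r L Y) (\<lambda>_. lborel)) Pr"
  shows "AE w in Pr. \<forall>Z \<phi> a b.
            (\<forall>d\<in>{1..M}. \<phi> d \<in> \<Theta>) \<and>
            real Z < real (min (r 0) M) ^ (2^L div 2) * (2 / (real M * real (2^L)))
            \<longrightarrow> (\<exists>X. deep_score (\<lambda>z. z) (*) f \<theta> M r L w y X
                       \<noteq> shallow_relu_max f \<phi> M (2^L) Z a b X)"
proof -
  let ?I = "deep_weight_idx M r L Y"
  let ?PM = "PiM ?I (\<lambda>_::nat \<times> nat \<times> nat \<times> nat. lborel :: real measure)"
  define R where "R = min (r 0) M"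
  define K where "K = (2::nat)^L div 2"
  define n where "n = R^K"
  have r0: "r 0 \<ge> 1" using r L by auto
  have K2: "(2::nat)^L = 2*K" unfolding K_def using L by (cases L) auto
  have K1: "K \<ge> 1" using K2 by (metis One_nat_def Suc_leI gr0I mult_0_right power_not_zero zero_neq_numeral)
  have KL: "K = 2^(L-1)" using K2 L by (cases L) auto
  show ?thesis
  proof (cases "M = 0")
    case True
    have nz: "\<not> (real Z < real (min (r 0) M) ^ (2^L div 2) * (2 / (real M * real (2^L))))" for Z
      using True by simp
    show ?thesis using nz by simp
  next
    case False
    have R1: "R \<ge> 1" "R \<le> M" "R \<le> r 0" using False r0 unfolding R_def by auto
    obtain xs a where bio: "\<forall>i\<in>{1..R}. \<forall>\<gamma>\<in>{1..R}. (\<Sum>d=1..M. a \<gamma> d * f (\<theta> d) (xs i)) = (if i = \<gamma> then 1 else 0)"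
      using templ[OF indep R1(2)] by blast
    define dig where "dig \<rho> k = \<rho> div R^k mod R + 1" for \<rho> k
    have dig1: "dig \<rho> k \<in> {1..R}" for \<rho> k
    proof -
      have "\<rho> div R^k mod R < R" using R1 by simp
      then show ?thesis unfolding dig_def by simp
    qed
    define T where "T \<rho> \<sigma> i = (if odd i then dig \<rho> ((i-1) div 2) else dig \<sigma> (i div 2 - 1))" for \<rho> \<sigma> i
    have T1: "T \<rho> \<sigma> i \<in> {1..R}" for \<rho> \<sigma> i unfolding T_def using dig1 by auto
    have Todd: "T \<rho> \<sigma> (2*k+1) = dig \<rho> k" for \<rho> \<sigma> k unfolding T_def by simp
    have Teven: "T \<rho> \<sigma> (2*k+2) = dig \<sigma> k" for \<rho> \<sigma> k unfolding T_def by simp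
    define XX where "XX \<rho> \<sigma> i = xs (T \<rho> \<sigma> i)" for \<rho> \<sigma> i
    define G where "G w \<rho> \<sigma> = deep_score (\<lambda>z. z) (*) f \<theta> M r L (restrict w ?I) y (XX \<rho> \<sigma>)" for w \<rho> \<sigma>
    define g where "g w = Determinant.det (mat n n (\<lambda>(\<rho>,\<sigma>). G w \<rho> \<sigma>))" for w
    have gpf: "g \<in> poly_fun ?I"
    proof -
      have "(\<lambda>w. Determinant.det (mat n n (\<lambda>(\<rho>,\<sigma>). G w \<rho> \<sigma>))) \<in> poly_fun ?I"
        unfolding G_def by (rule det_pf) (rule deep_score_pf)
      then show ?thesis unfolding g_def by simp
    qed
    have Gagree: "G w \<rho> \<sigma> = deep_score (\<lambda>z. z) (*) f \<theta> M r L w y (XX \<rho> \<sigma>)" for w \<rho> \<sigma>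
      unfolding G_def by (rule deep_score_agree[OF _ L y]) simp
    define w0' :: "nat \<times> nat \<times> nat \<times> nat \<Rightarrow> real" where
      "w0' = (\<lambda>(l,j,\<gamma>,\<alpha>). if l = 0 then (if \<gamma> \<le> R then a \<gamma> \<alpha> else 0)
          else if l = 1 then (if \<alpha> \<le> R then 1 else 0) else (if \<alpha> = 1 then 1 else 0))"
    define w0 where "w0 = restrict w0' ?I"
    have w0sp: "w0 \<in> space ?PM" unfolding w0_def by (simp add: space_PiM)
    have Gw0: "G w0 \<rho> \<sigma> = (\<Prod>k<K. if dig \<rho> k = dig \<sigma> k then 1 else 0)" for \<rho> \<sigma>
    proof -
      have "G w0 \<rho> \<sigma> = deep_score (\<lambda>z. z) (*) f \<theta> M r L w0' y (XX \<rho> \<sigma>)"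
        unfolding G_def w0_def by (rule deep_score_agree[OF _ L y]) simp
      also have "\<dots> = (\<Prod>k<2^(L-1). if T \<rho> \<sigma> (2*k+1) = T \<rho> \<sigma> (2*k+2) then 1 else 0)"
      proof (rule score_w0[where R=R])
        show "\<forall>j \<gamma>. \<gamma> \<ge> 1 \<longrightarrow> deep_u (\<lambda>z. z) (*) f \<theta> M r w0' (XX \<rho> \<sigma>) 0 j \<gamma> = (if T \<rho> \<sigma> j = \<gamma> then 1 else 0)"
        proof (intro allI impI)
          fix j \<gamma> :: nat assume "\<gamma> \<ge> 1"
          show "deep_u (\<lambda>z. z) (*) f \<theta> M r w0' (XX \<rho> \<sigma>) 0 j \<gamma> = (if T \<rho> \<sigma> j = \<gamma> then 1 else 0)"
            by (rule lvl0[where R=R and M=M and a=a and f=f and \<theta>=\<theta> and xs=xs, OF bio]) (use T1 \<open>\<gamma> \<ge> 1\<close> in \<open>auto simp: XX_def w0'_def\<close>)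
        qed
      qed (use T1 R1 r L in \<open>auto simp: w0'_def\<close>)
      also have "\<dots> = (\<Prod>k<2^(L-1). if dig \<rho> k = dig \<sigma> k then 1 else 0)"
        by (simp only: Todd Teven)
      finally show ?thesis using KL by simp
    qed
    have Gw0': "G w0 \<rho> \<sigma> = (if \<rho> = \<sigma> then 1 else 0)" if "\<rho> < n" "\<sigma> < n" for \<rho> \<sigma>
    proof (cases "\<rho> = \<sigma>")
      case True then show ?thesis by (simp add: Gw0)
    next
      case False
      have "\<exists>k<K. \<rho> div R^k mod R \<noteq> \<sigma> div R^k mod R"
        using dig_inj[of R \<rho> K \<sigma>] R1 that False unfolding n_def by auto
      then obtain k where k: "k < K" "dig \<rho> k \<noteq> dig \<sigma> k" unfolding dig_def by auto
      have "(\<Prod>k<K. if dig \<rho> k = dig \<sigma> k then 1 else 0) = (0::real)"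
        using k by (intro prod_zero) auto
      then show ?thesis using False by (simp add: Gw0)
    qed
    have "mat n n (\<lambda>(\<rho>,\<sigma>). G w0 \<rho> \<sigma>) = 1\<^sub>m n"
      by (rule eq_matI) (auto simp: Gw0')
    then have gw0: "g w0 = 1" unfolding g_def by simp
    have N: "{w \<in> space ?PM. g w = 0} \<in> null_sets ?PM"
      by (rule poly_null[OF finite_idx gpf w0sp]) (simp add: gw0)
    then have NPr: "{w \<in> space ?PM. g w = 0} \<in> null_sets Pr"
      using ac unfolding absolutely_continuous_def by auto
    have spPr: "space Pr = space ?PM" using sets by (rule sets_eq_imp_space_eq)
    have key: "g w = 0" if Zb: "real Z < real (min (r 0) M) ^ (2^L div 2) * (2 / (real M * real (2^L)))"
        and eqs: "\<forall>X. deep_score (\<lambda>z. z) (*) f \<theta> M r L w y X = shallow_relu_max f \<phi> M (2^L) Z a' b X"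
      for w Z \<phi> a' b
    proof -
      have card: "Z * (K * R) < R ^ K"
        using bound_nat[of Z R K M] Zb False K1 R1 K2 unfolding R_def K_def by auto
      have "mat n n (\<lambda>(\<rho>,\<sigma>). G w \<rho> \<sigma>) = mat (R^K) (R^K) (\<lambda>(\<rho>,\<sigma>). shallow_relu_max f \<phi> M (2*K) Z a' b (XX \<rho> \<sigma>))"
        unfolding n_def Gagree using eqs K2 by simp
      also have "Determinant.det \<dots> = 0"
      proof (rule shallow_det0[OF R1(1) K1 card])
        show "\<forall>\<rho> k. dig \<rho> k \<in> {1..R}" using dig1 by auto
        show "\<forall>\<rho> \<sigma> k. XX \<rho> \<sigma> (2*k+1) = xs (dig \<rho> k) \<and> XX \<rho> \<sigma> (2*k+2) = xs (dig \<sigma> k)"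
          unfolding XX_def Todd Teven by simp
      qed
      finally show "g w = 0" unfolding g_def .
    qed
    show ?thesis
      by (rule AE_I'[OF NPr]) (auto simp: spPr intro: key)
  qed
qed

end
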